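(* Let $s\ge1$. There is a three-layer Boolean threshold network with layer sizes $s$, $\lceil\log_2 s\rceil$, $s$ which maps $\mathbf{h}^i[s]$ to $\mathbf{h}^i[s]$ for every $i=0,\ldots,s-1$.
   Context: For integers $0\le i<s$, the step vector $\mathbf{h}^i[s]\in\{0,1\}^s$ has $\mathbf{h}^i[s]_j=1$ for $0\le j\le i$ and $0$ for $i<j<s$. A Boolean threshold function is a map $\{0,1\}^h\to\{0,1\}$, $\mathbf{u}\mapsto[\mathbf{w}\cdot\mathbf{u}\ge\theta]$ (value $1$ iff $\mathbf{w}\cdot\mathbf{u}\ge\theta$) with $\mathbf{w}\in\mathbb{Z}^h,\theta\in\mathbb{Z}$. A three-layer Boolean threshold network with layer sizes $p,q,p$ computes $\mathbf{u}\mapsto\mathbf{g}(\mathbf{f}(\mathbf{u}))$ where $\mathbf{f}:\{0,1\}^p\to\{0,1\}^q$ and $\mathbf{g}:\{0,1\}^q\to\{0,1\}^p$ have all coordinates Boolean threshold functions. *)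

theory Defs
  imports Complex_Main
begin

text \<open>Boolean vectors in {0,1}^h are modelled as functions nat => bool, of which only
  the coordinates 0..h-1 are relevant.\<close>

definition step_vec :: "nat \<Rightarrow> nat \<Rightarrow> (nat \<Rightarrow> bool)" where
  "step_vec s i = (\<lambda>j. j \<le> i \<and> j < s)"

definition threshold_fun :: "nat \<Rightarrow> ((nat \<Rightarrow> bool) \<Rightarrow> bool) \<Rightarrow> bool" where
  "threshold_fun h F \<longleftrightarrow> (\<exists>(w :: nat \<Rightarrow> int) (\<theta> :: int).
      \<forall>u. F u = ((\<Sum>j<h. w j * of_bool (u j)) \<ge> \<theta>))"

definition threshold_layer :: "nat \<Rightarrow> nat \<Rightarrow> ((nat \<Rightarrow> bool) \<Rightarrow> (nat \<Rightarrow> bool)) \<Rightarrow> bool" where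
  "threshold_layer p q F \<longleftrightarrow> (\<forall>k<q. threshold_fun p (\<lambda>u. F u k))"

end

theory Submission
  imports Defs
begin

lemma tele:
  fixes a :: "nat \<Rightarrow> int"
  shows "(\<Sum>j<Suc n. a j - (if j = 0 then 0 else a (j - 1))) = a n"
  by (induction n) auto

lemma binsum: "(\<Sum>k<m. 2^k * of_bool (odd ((i::nat) div 2^k))) = i mod 2^m"
proof (induction m)
  case 0 then show ?case by simp
next
  case (Suc m)
  have "i mod 2^(Suc m) = 2^m * (i div 2^m mod 2) + i mod 2^m"
    by (metis mod_mult2_eq power_Suc2)
  then show ?case using Suc by (simp add: odd_iff_mod_2_eq_one mod2_eq_if)
qed

lemma pow_ge:
  assumes "s \<ge> (1::nat)"
  shows "s \<le> 2 ^ nat \<lceil>log 2 (real s)\<rceil>"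
proof -
  have "real s = 2 powr log 2 (real s)" using assms by simp
  also have "\<dots> \<le> 2 powr real (nat \<lceil>log 2 (real s)\<rceil>)"
    by (intro powr_mono) linarith+
  also have "\<dots> = real (2 ^ nat \<lceil>log 2 (real s)\<rceil>)"
    by (simp add: powr_realpow)
  finally show ?thesis by linarith
qed

theorem lemma20:
  fixes s :: nat
  assumes "s \<ge> 1"
  shows "\<exists>f g. threshold_layer s (nat \<lceil>log 2 (real s)\<rceil>) f
             \<and> threshold_layer (nat \<lceil>log 2 (real s)\<rceil>) s g
             \<and> (\<forall>i<s. \<forall>j<s. g (f (step_vec s i)) j = step_vec s i j)"
proof -
  define m where "m = nat \<lceil>log 2 (real s)\<rceil>"
  have sm: "s \<le> 2 ^ m" using pow_ge[OF assms] m_def by simp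
  define a :: "nat \<Rightarrow> nat \<Rightarrow> int" where "a k j = of_bool (odd (j div 2^k))" for k j
  define w :: "nat \<Rightarrow> nat \<Rightarrow> int" where
    "w k j = a k j - (if j = 0 then 0 else a k (j - 1))" for k j
  define f where "f u k = ((\<Sum>j<s. w k j * of_bool (u j)) \<ge> 1)" for u k
  define g where "g v j = ((\<Sum>k<m. 2^k * of_bool (v k)) \<ge> (int j))" for v j
  have fl: "threshold_layer s m f"
    unfolding threshold_layer_def threshold_fun_def f_def by blast
  have gl: "threshold_layer m s g"
    unfolding threshold_layer_def threshold_fun_def g_def by blast
  have fstep: "f (step_vec s i) k = odd (i div 2^k)" if "i < s" for i k
  proof -
    have "(\<Sum>j<s. w k j * of_bool (step_vec s i j)) = (\<Sum>j\<in>{..<Suc i}. w k j)"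
      using that by (intro sum.mono_neutral_cong_right) (auto simp: step_vec_def)
    also have "\<dots> = a k i" unfolding w_def by (rule tele)
    finally show ?thesis unfolding f_def a_def by simp
  qed
  have main: "g (f (step_vec s i)) j = step_vec s i j" if "i < s" "j < s" for i j
  proof -
    have "(\<Sum>k<m. 2^k * of_bool (f (step_vec s i) k)) = (int (\<Sum>k<m. 2^k * of_bool (odd (i div 2^k))))"
      using fstep[OF that(1)] by simp
    also have "\<dots> = int (i mod 2^m)" by (subst binsum) (rule refl)
    also have "\<dots> = int i" using sm that by simp
    finally show ?thesis unfolding g_def step_vec_def using that by auto
  qed
  show ?thesis unfolding m_def[symmetric] using fl gl main by blast
qed

end
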